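(* Let $\ell$ be a prime and let $R,S,T$ be pairwise coprime positive integers. Let $S'=\prod_{q:\ \operatorname{ord}_q(S)\text{ odd}} q$, let $v$ be the positive integer with $SS'=v^2$, and write $TS'=mn^2$ with $m$ a squarefree positive integer and $n$ a positive integer. Let $K=\mathbb{Q}(\sqrt{-m})$ with ring of integers $\mathcal{O}$. Suppose (i) $\operatorname{ord}_{\mathfrak q}(n\sqrt{-m})<\ell$ for all prime ideals $\mathfrak q$ of $\mathcal{O}$; (ii) for each $c\in\{1,-1,-2\}$ the polynomial $X^\ell+(c-X)^\ell-2$ has no roots in $\mathcal{O}$; (iii) the only root of $X^\ell+(2-X)^\ell-2$ in $\mathcal{O}$ is $X=1$. Then the only solution of \[ v\sigma^\ell+n\sqrt{-m}=n\sqrt{-m}\,\eta^\ell \] with $\sigma\in\mathbb{Z}$ and $\eta\in K$ is $\sigma=0$, $\eta=1$. *)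

theory Defs
  imports Complex_Main "HOL-Computational_Algebra.Polynomial" "HOL-Computational_Algebra.Squarefree"
    "HOL-Computational_Algebra.Primes" "HOL-Algebra.Ideal_Product"
begin

definition odd_part_rad :: "nat \<Rightarrow> nat" where
  "odd_part_rad S = (\<Prod>q \<in> {q. prime q \<and> odd (multiplicity q S)}. q)"

definition sqrt_neg :: "nat \<Rightarrow> complex" where
  "sqrt_neg m = \<i> * complex_of_real (sqrt (real m))"

definition quad_field :: "nat \<Rightarrow> complex set" where
  "quad_field m = {of_rat a + of_rat b * sqrt_neg m | a b. True}"

definition quad_ints :: "nat \<Rightarrow> complex set" where
  "quad_ints m = {z \<in> quad_field m. algebraic_int z}"

definition quad_ring :: "nat \<Rightarrow> complex ring" where
  "quad_ring m = \<lparr> carrier = quad_ints m, mult = (*), one = 1, zero = 0, add = (+) \<rparr>"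

definition ideal_ord :: "('a, 'b) ring_scheme \<Rightarrow> 'a set \<Rightarrow> 'a \<Rightarrow> nat" where
  "ideal_ord R q x = (GREATEST k. x \<in> q [^]\<^bsub>ideals_set R\<^esub> k)"

end

theory Submission
  imports Defs
begin
lemma sn_sq: "sqrt_neg m * sqrt_neg m = - of_nat m"
  unfolding sqrt_neg_def
  by (simp add: algebra_simps flip: of_real_mult)

lemma sn_sq2: "sqrt_neg m ^ 2 = - of_nat m"
  using sn_sq by (simp add: power2_eq_square)

lemma cnj_sn: "cnj (sqrt_neg m) = - sqrt_neg m"
  unfolding sqrt_neg_def by simp

lemma Re_sn: "Re (sqrt_neg m) = 0" and Im_sn: "Im (sqrt_neg m) = sqrt (real m)"
  unfolding sqrt_neg_def by simp_all

lemma sn_nz: "m > 0 \<Longrightarrow> sqrt_neg m \<noteq> 0"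
  using Im_sn[of m] by (metis of_nat_0_less_iff real_sqrt_gt_zero zero_complex.simps(2) less_irrefl)

lemma coords_unique:
  fixes a b c d :: real
  assumes "m > 0" "of_real a + of_real b * sqrt_neg m = of_real c + of_real d * sqrt_neg m"
  shows "a = c \<and> b = d"
proof -
  from assms(2) have "Re (of_real a + of_real b * sqrt_neg m) = Re (of_real c + of_real d * sqrt_neg m)"
    "Im (of_real a + of_real b * sqrt_neg m) = Im (of_real c + of_real d * sqrt_neg m)" by simp_all
  hence "a = c" "b * sqrt m = d * sqrt m" by (simp_all add: Re_sn Im_sn)
  moreover have "sqrt (real m) \<noteq> 0" using assms(1) by simp
  ultimately show ?thesis by simp
qed

lemma bounded_pow_int:
  fixes r :: rat and C :: int
  assumes "C \<noteq> 0" "\<And>k. of_int C * r ^ k \<in> \<int>"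
  shows "r \<in> \<int>"
proof -
  obtain A B where qr: "quotient_of r = (A, B)" by (cases "quotient_of r")
  hence B: "B > 0" "coprime A B" and r: "r = of_int A / of_int B"
    by (simp_all add: quotient_of_denom_pos quotient_of_coprime quotient_of_div)
  have dv: "B ^ k dvd C" for k
  proof -
    from assms(2)[of k] obtain t where "of_int C * r ^ k = of_int t" by (auto elim: Ints_cases)
    hence "of_int C * of_int A ^ k = (of_int t * of_int B ^ k :: rat)"
      using B by (simp add: r power_divide field_simps)
    hence "C * A ^ k = t * B ^ k" by (metis of_int_eq_iff of_int_mult of_int_power)
    hence "B ^ k dvd C * A ^ k" by simp
    moreover have "coprime (B ^ k) (A ^ k)" using B by (simp add: coprime_commute)
    ultimately show ?thesis using coprime_dvd_mult_left_iff by blast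
  qed
  have "B = 1"
  proof (rule ccontr)
    assume "B \<noteq> 1" hence "B \<ge> 2" using B by simp
    define k where "k = nat \<bar>C\<bar>"
    have "\<bar>C\<bar> < 2 ^ k" unfolding k_def
      by (metis abs_ge_zero int_nat_eq less_exp of_nat_less_iff of_nat_numeral of_nat_power nat_0_le)
    also have "2 ^ k \<le> B ^ k" using \<open>B \<ge> 2\<close> by (simp add: power_mono)
    also have "B ^ k \<le> \<bar>C\<bar>" using dvd_imp_le_int[OF assms(1) dv[of k]] B by simp
    finally show False by simp
  qed
  thus ?thesis using r by simp
qed

definition dl :: "nat \<Rightarrow> int" where "dl m = (if m mod 4 = 3 then 1 else 0)"
definition nw :: "nat \<Rightarrow> int" where "nw m = (if m mod 4 = 3 then (int m + 1) div 4 else int m)"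
definition om :: "nat \<Rightarrow> complex" where
  "om m = (if m mod 4 = 3 then (1 + sqrt_neg m) / 2 else sqrt_neg m)"
definition ZK :: "nat \<Rightarrow> complex set" where
  "ZK m = {of_int u + of_int v * om m | u v. True}"

lemma om_sq: "om m * om m = of_int (dl m) * om m - of_int (nw m)"
proof (cases "m mod 4 = 3")
  case True
  hence "int m + 1 = 4 * ((int m + 1) div 4)" by presburger
  hence "of_int (int m + 1) = (of_int (4 * ((int m + 1) div 4)) :: complex)" by simp
  hence e: "4 * of_int (nw m) = of_nat m + (1::complex)"
    using True unfolding nw_def by simp
  have "om m * om m = (1 + 2 * sqrt_neg m + sqrt_neg m * sqrt_neg m) / 4"
    using True unfolding om_def by (simp add: field_simps)
  also have "\<dots> = (1 + 2 * sqrt_neg m - of_nat m) / 4" by (simp add: sn_sq)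
  also have "\<dots> = (1 + sqrt_neg m) / 2 - (4 * of_int (nw m)) / 4 + 0"
    by (subst e) (simp add: field_simps)
  also have "\<dots> = of_int (dl m) * om m - of_int (nw m)"
    using True unfolding om_def dl_def by simp
  finally show ?thesis .
next
  case False
  then show ?thesis using sn_sq[of m] unfolding om_def dl_def nw_def by simp
qed

lemma cnj_om: "cnj (om m) = of_int (dl m) - om m"
  unfolding om_def dl_def by (simp add: cnj_sn field_simps)

lemma om_cnj: "om m * cnj (om m) = of_int (nw m)"
  unfolding cnj_om using om_sq[of m] by (simp add: algebra_simps)

lemma ZK_iff: "z \<in> ZK m \<longleftrightarrow> (\<exists>u v. z = of_int u + of_int v * om m)"
  unfolding ZK_def by blast

lemma ZK_intI: "of_int u + of_int v * om m \<in> ZK m"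
  unfolding ZK_def by blast

lemma ZK_of_int [simp]: "of_int u \<in> ZK m"
  using ZK_intI[of u 0 m] by simp

lemma ZK_of_nat [simp]: "of_nat u \<in> ZK m"
  using ZK_of_int[of "int u" m] by simp

lemma ZK_0 [simp]: "0 \<in> ZK m" and ZK_1 [simp]: "1 \<in> ZK m"
  using ZK_of_int[of 0 m] ZK_of_int[of 1 m] by simp_all

lemma ZK_om [simp]: "om m \<in> ZK m"
  using ZK_intI[of 0 1 m] by simp

lemma ZK_add: "x \<in> ZK m \<Longrightarrow> y \<in> ZK m \<Longrightarrow> x + y \<in> ZK m"
proof -
  assume "x \<in> ZK m" "y \<in> ZK m"
  then obtain u1 v1 u2 v2 where x: "x = of_int u1 + of_int v1 * om m" and y: "y = of_int u2 + of_int v2 * om m"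
    unfolding ZK_iff by blast
  have "x + y = of_int (u1 + u2) + of_int (v1 + v2) * om m"
    unfolding x y by (simp add: algebra_simps)
  thus ?thesis by (metis ZK_intI)
qed

lemma ZK_uminus: "x \<in> ZK m \<Longrightarrow> - x \<in> ZK m"
proof -
  assume "x \<in> ZK m"
  then obtain u1 v1 where x: "x = of_int u1 + of_int v1 * om m"
    unfolding ZK_iff by blast
  have "- x = of_int (- u1) + of_int (- v1) * om m"
    unfolding x by (simp add: algebra_simps)
  thus ?thesis by (metis ZK_intI)
qed

lemma ZK_diff: "x \<in> ZK m \<Longrightarrow> y \<in> ZK m \<Longrightarrow> x - y \<in> ZK m"
  using ZK_add ZK_uminus by (metis diff_conv_add_uminus)

lemma ZK_mult: "x \<in> ZK m \<Longrightarrow> y \<in> ZK m \<Longrightarrow> x * y \<in> ZK m"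
proof -
  assume "x \<in> ZK m" "y \<in> ZK m"
  then obtain u1 v1 u2 v2 where x: "x = of_int u1 + of_int v1 * om m" and y: "y = of_int u2 + of_int v2 * om m"
    unfolding ZK_iff by blast
  have "x * y = of_int (u1*u2 - nw m * v1 * v2) + of_int (u1*v2 + u2*v1 + dl m * v1 * v2) * om m"
  proof -
    have "x * y = of_int u1 * of_int u2 + (of_int u1 * of_int v2 + of_int u2 * of_int v1) * om m
       + of_int v1 * of_int v2 * (om m * om m)" unfolding x y by (simp add: algebra_simps)
    also have "\<dots> = of_int (u1*u2 - nw m * v1 * v2) + of_int (u1*v2 + u2*v1 + dl m * v1 * v2) * om m"
      unfolding om_sq by (simp add: algebra_simps)
    finally show ?thesis .
  qed
  thus ?thesis by (metis ZK_intI)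
qed

lemma ZK_power: "x \<in> ZK m \<Longrightarrow> x ^ k \<in> ZK m"
  by (induction k) (auto intro: ZK_mult)

lemma ZK_sum: "(\<And>i. i \<in> A \<Longrightarrow> f i \<in> ZK m) \<Longrightarrow> sum f A \<in> ZK m"
  by (induction A rule: infinite_finite_induct) (auto intro: ZK_add)

lemma ZK_cnj: "x \<in> ZK m \<Longrightarrow> cnj x \<in> ZK m"
proof -
  assume "x \<in> ZK m"
  then obtain u v where x: "x = of_int u + of_int v * om m" unfolding ZK_iff by blast
  have "cnj x = of_int (u + v * dl m) + of_int (- v) * om m"
    unfolding x by (simp add: cnj_om algebra_simps)
  thus ?thesis by (metis ZK_intI)
qed

lemma ZK_norm: "(of_int u + of_int v * om m) * cnj (of_int u + of_int v * om m)
   = of_int (u^2 + dl m * u * v + nw m * v^2)"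
proof -
  have "(of_int u + of_int v * om m) * cnj (of_int u + of_int v * om m)
     = (of_int u + of_int v * om m) * (of_int u + of_int v * (of_int (dl m) - om m))"
    by (simp add: cnj_om)
  also have "\<dots> = of_int u ^ 2 + of_int u * of_int v * of_int (dl m) + of_int v ^ 2 * (om m * (of_int (dl m) - om m))"
    by (simp add: algebra_simps power2_eq_square)
  also have "om m * (of_int (dl m) - om m) = of_int (nw m)"
    using om_cnj[of m] by (simp add: cnj_om)
  finally show ?thesis by (simp add: algebra_simps)
qed

lemma ZK_field: "z \<in> ZK m \<Longrightarrow> z \<in> quad_field m"
proof -
  assume "z \<in> ZK m"
  then obtain u v where z: "z = of_int u + of_int v * om m" unfolding ZK_iff by blast
  show ?thesis
  proof (cases "m mod 4 = 3")
    case True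
    have "z = of_rat (of_int u + of_int v / 2) + of_rat (of_int v / 2) * sqrt_neg m"
      using True unfolding z om_def by (simp add: of_rat_add of_rat_divide of_rat_mult field_simps)
    thus ?thesis unfolding quad_field_def by blast
  next
    case False
    have "z = of_rat (of_int u) + of_rat (of_int v) * sqrt_neg m"
      using False unfolding z om_def by simp
    thus ?thesis unfolding quad_field_def by blast
  qed
qed

lemma ZK_algint: "z \<in> ZK m \<Longrightarrow> algebraic_int z"
proof -
  assume "z \<in> ZK m"
  then obtain u v where z: "z = of_int u + of_int v * om m" unfolding ZK_iff by blast
  define T where "T = z + cnj z"
  define N where "N = z * cnj z"
  have T: "T = of_int (2 * u + v * dl m)" unfolding T_def z by (simp add: cnj_om algebra_simps)
  have N: "N = of_int (u^2 + dl m * u * v + nw m * v^2)" unfolding N_def z by (rule ZK_norm)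
  show ?thesis
  proof
    show "lead_coeff [:N, -T, 1:] = 1" by simp
    show "\<forall>i. coeff [:N, - T, 1:] i \<in> \<int>"
      using T N by (auto simp: coeff_pCons split: nat.splits)
    show "poly [:N, - T, 1:] z = 0"
      unfolding T_def N_def by (simp add: algebra_simps power2_eq_square)
  qed
qed

definition inL :: "nat \<Rightarrow> complex \<Rightarrow> bool" where
  "inL m w \<longleftrightarrow> (\<exists>U V :: int. w = of_int U + of_int V * sqrt_neg m)"

lemma inL_add: "inL m x \<Longrightarrow> inL m y \<Longrightarrow> inL m (x + y)"
proof -
  assume "inL m x" "inL m y"
  then obtain u1 v1 u2 v2 where x: "x = of_int u1 + of_int v1 * sqrt_neg m" and y: "y = of_int u2 + of_int v2 * sqrt_neg m"
    unfolding inL_def by blast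
  have "x + y = of_int (u1 + u2) + of_int (v1 + v2) * sqrt_neg m"
    unfolding x y by (simp add: algebra_simps)
  thus ?thesis unfolding inL_def by blast
qed

lemma inL_mult: "inL m x \<Longrightarrow> inL m y \<Longrightarrow> inL m (x * y)"
proof -
  assume "inL m x" "inL m y"
  then obtain u1 v1 u2 v2 where x: "x = of_int u1 + of_int v1 * sqrt_neg m" and y: "y = of_int u2 + of_int v2 * sqrt_neg m"
    unfolding inL_def by blast
  have "x * y = of_int u1 * of_int u2 + (of_int u1 * of_int v2 + of_int u2 * of_int v1) * sqrt_neg m
       + of_int v1 * of_int v2 * (sqrt_neg m * sqrt_neg m)" unfolding x y by (simp add: algebra_simps)
  also have "\<dots> = of_int (u1 * u2 - int m * v1 * v2) + of_int (u1 * v2 + u2 * v1) * sqrt_neg m"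
    unfolding sn_sq by (simp add: algebra_simps)
  finally show ?thesis unfolding inL_def by blast
qed

lemma inL_of_int: "inL m (of_int c)"
  unfolding inL_def by (rule exI[of _ c], rule exI[of _ 0]) simp

lemma inL_scale: "inL m x \<Longrightarrow> inL m (of_int c * x)"
  using inL_mult inL_of_int by blast

lemma inL_uminus: "inL m x \<Longrightarrow> inL m (- x)"
  using inL_scale[of m x "-1"] by simp

lemma inL_sum: "(\<And>i. i \<in> A \<Longrightarrow> inL m (f i)) \<Longrightarrow> inL m (sum f A)"
  by (induction A rule: infinite_finite_induct) (auto intro: inL_add simp: inL_of_int[of m 0, simplified])

lemma of_rat_complex: "(of_rat r :: complex) = of_real (of_rat r)"
proof -
  obtain A B where "quotient_of r = (A, B)" by (cases "quotient_of r")
  hence "r = of_int A / of_int B" by (simp add: quotient_of_div)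
  thus ?thesis by (simp add: of_rat_divide)
qed

lemma cnj_of_rat [simp]: "cnj (of_rat r) = of_rat r"
  by (metis complex_cnj_complex_of_real of_rat_complex)

lemma cnj_z: "cnj (of_rat a + of_rat b * sqrt_neg m) = of_rat a - of_rat b * sqrt_neg m"
  by (simp add: cnj_sn)

lemma norm_z: "(of_rat a + of_rat b * sqrt_neg m) * cnj (of_rat a + of_rat b * sqrt_neg m)
   = of_rat (a^2 + of_nat m * b^2)"
proof -
  have "(of_rat a + of_rat b * sqrt_neg m) * cnj (of_rat a + of_rat b * sqrt_neg m)
     = of_rat a * of_rat a - of_rat b * of_rat b * (sqrt_neg m * sqrt_neg m)"
    by (simp add: cnj_sn algebra_simps)
  also have "\<dots> = of_rat (a^2 + of_nat m * b^2)"
    by (simp add: sn_sq of_rat_add of_rat_mult power2_eq_square)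
  finally show ?thesis .
qed

lemma norm_int:
  assumes m: "m > 0" and ai: "algebraic_int (of_rat a + of_rat b * sqrt_neg m)"
  shows "a^2 + of_nat m * b^2 \<in> \<int>"
proof -
  define z where "z = of_rat a + of_rat b * sqrt_neg m"
  obtain A1 B1 where q1: "quotient_of a = (A1, B1)" by (cases "quotient_of a")
  obtain A2 B2 where q2: "quotient_of b = (A2, B2)" by (cases "quotient_of b")
  have B1: "B1 > 0" "a = of_int A1 / of_int B1" using q1 by (simp_all add: quotient_of_denom_pos quotient_of_div)
  have B2: "B2 > 0" "b = of_int A2 / of_int B2" using q2 by (simp_all add: quotient_of_denom_pos quotient_of_div)
  define D where "D = B1 * B2"
  have D: "D > 0" using B1 B2 by (simp add: D_def)
  have "of_rat a * of_int B1 = (of_rat (of_int A1) :: complex)"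
    using B1 by (simp add: of_rat_divide)
  hence a1: "of_rat a * of_int B1 = (of_int A1 :: complex)" by simp
  have "of_rat b * of_int B2 = (of_rat (of_int A2) :: complex)"
    using B2 by (simp add: of_rat_divide)
  hence b1: "of_rat b * of_int B2 = (of_int A2 :: complex)" by simp
  have "of_int D * z = (of_rat a * of_int B1) * of_int B2 + (of_rat b * of_int B2) * of_int B1 * sqrt_neg m"
    unfolding z_def D_def by (simp add: algebra_simps)
  also have "\<dots> = of_int (A1 * B2) + of_int (A2 * B1) * sqrt_neg m"
    unfolding a1 b1 by simp
  finally have "of_int D * z = of_int (A1 * B2) + of_int (A2 * B1) * sqrt_neg m" .
  hence Dz: "inL m (of_int D * z)" unfolding inL_def by blast
  have pw: "inL m (of_int (D ^ k) * z ^ k)" for k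
  proof (induction k)
    case 0 then show ?case using inL_of_int[of m 1] by simp
  next
    case (Suc k)
    have eq: "of_int (D ^ Suc k) * z ^ Suc k = (of_int (D ^ k) * z ^ k) * (of_int D * z)"
      by (simp add: algebra_simps)
    show ?case unfolding eq by (rule inL_mult[OF Suc Dz])
  qed
  from ai obtain p where p: "poly (map_poly of_int p) z = 0" "lead_coeff p = 1"
    unfolding z_def algebraic_int_altdef_ipoly by blast
  define d where "d = degree p"
  have dg: "degree (map_poly (of_int :: int \<Rightarrow> complex) p) = d"
    unfolding d_def by (rule degree_map_poly) simp
  have "0 = (\<Sum>i\<le>d. of_int (coeff p i) * z ^ i)"
    using p(1) unfolding poly_altdef dg by (simp add: coeff_map_poly)
  also have "\<dots> = (\<Sum>i<d. of_int (coeff p i) * z ^ i) + z ^ d"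
    using p(2) by (simp add: lessThan_Suc_atMost[symmetric] d_def)
  finally have zd: "z ^ d = - (\<Sum>i<d. of_int (coeff p i) * z ^ i)"
    by (simp add: eq_neg_iff_add_eq_0 add.commute)
  have main: "inL m (of_int (D ^ d) * z ^ k)" for k
  proof (induction k rule: less_induct)
    case (less k)
    show ?case
    proof (cases "k < d")
      case True
      have "D ^ d = D ^ (d - k) * D ^ k" using True by (simp add: power_add[symmetric])
      hence eq: "of_int (D ^ d) * z ^ k = of_int (D ^ (d - k)) * (of_int (D ^ k) * z ^ k)"
        by (simp only: of_int_mult mult.assoc)
      show ?thesis unfolding eq by (rule inL_scale[OF pw[of k]])
    next
      case False
      have "z ^ k = z ^ (k - d) * z ^ d"
        using False by (simp add: power_add[symmetric])
      also have "\<dots> = - (\<Sum>i<d. z ^ (k - d) * (of_int (coeff p i) * z ^ i))"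
        unfolding zd by (simp only: sum_distrib_left mult_minus_right)
      also have "\<dots> = - (\<Sum>i<d. of_int (coeff p i) * z ^ (k - d + i))"
        by (intro arg_cong[where f=uminus] sum.cong refl) (simp add: power_add mult.left_commute)
      finally have zk: "z ^ k = - (\<Sum>i<d. of_int (coeff p i) * z ^ (k - d + i))" .
      have "of_int (D ^ d) * z ^ k = - (\<Sum>i<d. of_int (D ^ d) * (of_int (coeff p i) * z ^ (k - d + i)))"
        unfolding zk by (simp only: sum_distrib_left mult_minus_right)
      also have "\<dots> = - (\<Sum>i<d. of_int (coeff p i) * (of_int (D ^ d) * z ^ (k - d + i)))"
        by (intro arg_cong[where f=uminus] sum.cong refl) (simp only: mult.left_commute)
      finally have "of_int (D ^ d) * z ^ k = - (\<Sum>i<d. of_int (coeff p i) * (of_int (D ^ d) * z ^ (k - d + i)))" .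
      moreover have "inL m (\<Sum>i<d. of_int (coeff p i) * (of_int (D ^ d) * z ^ (k - d + i)))"
        by (rule inL_sum, rule inL_scale, rule less) (use False in auto)
      ultimately show ?thesis using inL_uminus by simp
    qed
  qed
  define E where "E = D ^ d"
  have "of_int (E^2) * (a^2 + of_nat m * b^2) ^ k \<in> \<int>" for k
  proof -
    from main[of k] obtain U V where UV: "of_int E * z ^ k = of_int U + of_int V * sqrt_neg m"
      unfolding inL_def E_def by blast
    have "cnj (of_int E * z ^ k) = of_int U - of_int V * sqrt_neg m"
      unfolding UV by (simp add: cnj_sn)
    hence "(of_int E * z ^ k) * cnj (of_int E * z ^ k) = (of_int U + of_int V * sqrt_neg m) * (of_int U - of_int V * sqrt_neg m)"
      using UV by simp
    also have "\<dots> = of_int U * of_int U - of_int V * of_int V * (sqrt_neg m * sqrt_neg m)"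
      by (simp add: algebra_simps)
    also have "\<dots> = of_int (U^2 + int m * V^2)" by (simp add: sn_sq power2_eq_square)
    finally have e1: "(of_int E * z ^ k) * cnj (of_int E * z ^ k) = of_int (U^2 + int m * V^2)" .
    have "(of_int E * z ^ k) * cnj (of_int E * z ^ k) = (of_int E * z ^ k) * (of_int E * cnj z ^ k)"
      by simp
    also have "\<dots> = (of_int E * of_int E) * (z ^ k * cnj z ^ k)" by (simp only: mult_ac)
    also have "\<dots> = of_int (E^2) * (z * cnj z) ^ k" by (simp only: power_mult_distrib power2_eq_square of_int_mult)
    also have "\<dots> = of_rat (of_int (E^2) * (a^2 + of_nat m * b^2) ^ k)"
      unfolding z_def norm_z by (simp add: of_rat_mult of_rat_power)
    finally have "of_rat (of_int (E^2) * (a^2 + of_nat m * b^2) ^ k) = (of_rat (of_int (U^2 + int m * V^2)) :: complex)"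
      using e1 by (simp add: of_rat_add of_rat_mult of_rat_power)
    hence "of_int (E^2) * (a^2 + of_nat m * b^2) ^ k = of_int (U^2 + int m * V^2)"
      using of_rat_eq_iff by blast
    thus ?thesis by simp
  qed
  moreover have "E^2 \<noteq> 0" using D unfolding E_def by simp
  ultimately show ?thesis using bounded_pow_int[of "E^2"] by blast
qed

lemma sq_mod4: "(X::int)^2 mod 4 = (if even X then 0 else 1)"
proof (cases "even X")
  case True then obtain x where "X = 2*x" by blast
  then show ?thesis by (simp add: power2_eq_square)
next
  case False then obtain x where "X = 2*x+1" using oddE by blast
  hence h: "X^2 = 4*(x*x + x) + 1" by (simp add: power2_eq_square algebra_simps)
  have g: "\<And>t::int. (4*t+1) mod 4 = 1" by presburger
  show ?thesis using False g[of "x*x+x"] unfolding h by simp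
qed

lemma sum_mod4: "((X::int)^2 + M * Y^2) mod 4 = ((if even X then 0 else 1) + (M mod 4) * (if even Y then 0 else 1)) mod 4"
proof -
  have "((X::int)^2 + M * Y^2) mod 4 = (X^2 mod 4 + (M * Y^2) mod 4) mod 4" by (simp add: mod_add_eq)
  also have "(M * Y^2) mod 4 = ((M mod 4) * (Y^2 mod 4)) mod 4" by (simp add: mod_mult_eq)
  also have "(X^2 mod 4 + ((M mod 4) * (Y^2 mod 4)) mod 4) mod 4 = (X^2 mod 4 + (M mod 4) * (Y^2 mod 4)) mod 4"
    by (simp add: mod_add_right_eq)
  finally have "((X::int)^2 + M * Y^2) mod 4 = (X^2 mod 4 + (M mod 4) * (Y^2 mod 4)) mod 4" .
  thus ?thesis by (simp add: sq_mod4)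
qed

lemma sqf_mod4: "squarefree (m::nat) \<Longrightarrow> m mod 4 \<noteq> 0"
proof
  assume "squarefree m" "m mod 4 = 0"
  hence "2^2 dvd m" by auto
  with \<open>squarefree m\<close> have "is_unit (2::nat)" by (rule squarefreeD)
  thus False by simp
qed

lemma par3: assumes "int m mod 4 = 3" "4 dvd X^2 + int m * Y^2" shows "even (X - Y)"
proof -
  have "(X^2 + int m * Y^2) mod 4 = 0" using assms(2) by simp
  hence "((if even X then 0 else 1) + 3 * (if even Y then 0 else 1)) mod 4 = (0::int)"
    using sum_mod4[of X "int m" Y] assms(1) by simp
  thus ?thesis by (auto split: if_splits)
qed

lemma par12: assumes "int m mod 4 = 1 \<or> int m mod 4 = 2" "4 dvd X^2 + int m * Y^2" shows "even X \<and> even Y"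
proof -
  have "(X^2 + int m * Y^2) mod 4 = 0" using assms(2) by simp
  hence h: "((if even X then 0 else 1) + (int m mod 4) * (if even Y then 0 else 1)) mod 4 = (0::int)"
    using sum_mod4[of X "int m" Y] by simp
  from assms(1) show ?thesis
  proof
    assume "int m mod 4 = 1" thus ?thesis using h by (auto split: if_splits)
  next
    assume a: "int m mod 4 = 2"
    hence e: "even X" using h by (auto split: if_splits)
    then obtain x where x: "X = 2 * x" by blast
    define k where "k = int m div 4"
    have k: "int m = 4 * k + 2" using a unfolding k_def by presburger
    have "X^2 + int m * Y^2 = 4 * (x^2 + k * Y^2) + 2 * Y^2"
      unfolding x k by (simp add: power2_eq_square algebra_simps)
    hence "4 dvd 4 * (x^2 + k * Y^2) + 2 * Y^2" using assms(2) by simp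
    hence "4 dvd 2 * Y^2" using dvd_add_right_iff[of 4 "4 * (x^2 + k * Y^2)" "2 * Y^2"] by simp
    then obtain k where "2 * Y^2 = 4 * k" by blast
    hence "Y^2 = 2 * k" by simp
    hence "even (Y^2)" by simp
    hence "even Y" by simp
    with e show ?thesis by simp
  qed
qed

lemma rat_sqf_int:
  fixes c :: rat
  assumes "squarefree m" "of_nat m * c^2 = of_int K"
  shows "c \<in> \<int>"
proof -
  obtain A B where q: "quotient_of c = (A, B)" by (cases "quotient_of c")
  hence B: "B > 0" "coprime A B" and c: "c = of_int A / of_int B"
    by (simp_all add: quotient_of_denom_pos quotient_of_coprime quotient_of_div)
  have "of_nat m * of_int A ^ 2 = (of_int K * of_int B ^ 2 :: rat)"
    using assms(2) B unfolding c by (simp add: power_divide field_simps)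
  hence "rat_of_int (int m * A^2) = rat_of_int (K * B^2)" by simp
  hence e: "int m * A^2 = K * B^2" by (rule of_int_eq_iff[THEN iffD1])
  have "B^2 dvd int m * A^2" unfolding e by simp
  moreover have "coprime (B^2) (A^2)" using B by (simp add: coprime_commute)
  ultimately have "B^2 dvd int m" using coprime_dvd_mult_left_iff by blast
  moreover have "int ((nat B)^2) = B^2" using B by simp
  ultimately have "(nat B)^2 dvd m" by (metis int_dvd_int_iff of_nat_eq_iff)
  hence "is_unit (nat B)" using assms(1) squarefreeD by blast
  hence "B = 1" using B by simp
  thus ?thesis using c by simp
qed

lemma quad_ints_ZK:
  assumes m: "m > 0" and sq: "squarefree m"
  shows "quad_ints m = ZK m"
proof
  show "ZK m \<subseteq> quad_ints m" unfolding quad_ints_def using ZK_field ZK_algint by blast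
next
  show "quad_ints m \<subseteq> ZK m"
  proof
    fix z assume "z \<in> quad_ints m"
    then obtain a b where z: "z = of_rat a + of_rat b * sqrt_neg m" and ai: "algebraic_int z"
      unfolding quad_ints_def quad_field_def by blast
    have N: "a^2 + of_nat m * b^2 \<in> \<int>" using norm_int[OF m] ai z by simp
    have ai1: "algebraic_int (of_rat (a + 1) + of_rat b * sqrt_neg m)"
    proof (rule algebraic_int_root[OF ai, of "[:-1, 1:]"])
      show "poly [:- 1, 1:] (of_rat (a + 1) + of_rat b * sqrt_neg m) = z"
        unfolding z by (simp add: of_rat_add)
    qed (auto simp: coeff_pCons split: nat.splits)
    have N1: "(a + 1)^2 + of_nat m * b^2 \<in> \<int>" using norm_int[OF m ai1] .
    have "2 * a = ((a + 1)^2 + of_nat m * b^2) - (a^2 + of_nat m * b^2) - 1"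
      by (simp add: power2_eq_square algebra_simps)
    hence "2 * a \<in> \<int>" using N N1 by (metis Ints_1 Ints_diff)
    then obtain X where X: "2 * a = of_int X" by (auto elim: Ints_cases)
    from N obtain Nn where Nn: "a^2 + of_nat m * b^2 = of_int Nn" by (auto elim: Ints_cases)
    have "of_nat m * (2 * b)^2 = of_int (4 * Nn - X^2)"
    proof -
      have "of_nat m * (2 * b)^2 = 4 * (a^2 + of_nat m * b^2) - (2 * a)^2"
        by (simp add: power2_eq_square algebra_simps)
      thus ?thesis unfolding Nn X by simp
    qed
    hence "2 * b \<in> \<int>" by (rule rat_sqf_int[OF sq])
    then obtain Y where Y: "2 * b = of_int Y" by (auto elim: Ints_cases)
    have "rat_of_int (X^2 + int m * Y^2) = (2*a)^2 + of_nat m * (2*b)^2" unfolding X Y by simp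
    also have "\<dots> = 4 * (a^2 + of_nat m * b^2)" by (simp add: power2_eq_square algebra_simps)
    finally have "rat_of_int (X^2 + int m * Y^2) = 4 * of_int Nn" unfolding Nn .
    hence "rat_of_int (X^2 + int m * Y^2) = rat_of_int (4 * Nn)" by simp
    hence "X^2 + int m * Y^2 = 4 * Nn" by (rule of_int_eq_iff[THEN iffD1])
    hence dv: "4 dvd X^2 + int m * Y^2" by simp
    have za: "z = of_int X / 2 + of_int Y / 2 * sqrt_neg m"
    proof -
      have "a = of_int X / 2" using X by (simp add: field_simps)
      hence "of_rat a = (of_rat (of_int X / 2) :: complex)" by simp
      moreover have "b = of_int Y / 2" using Y by (simp add: field_simps)
      hence "of_rat b = (of_rat (of_int Y / 2) :: complex)" by simp
      ultimately have "of_rat a = of_int X / (2::complex)" "of_rat b = of_int Y / (2::complex)"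
        by (simp_all add: of_rat_divide)
      thus ?thesis unfolding z by (simp only:)
    qed
    have m4: "int m mod 4 \<noteq> 0" using sqf_mod4[OF sq] by presburger
    show "z \<in> ZK m"
    proof (cases "m mod 4 = 3")
      case True
      hence "int m mod 4 = 3" by presburger
      from par3[OF this dv] obtain u where u: "X - Y = 2 * u" by blast
      have Xu: "X = 2 * u + Y" using u by simp
      have omm: "om m = (1 + sqrt_neg m) / 2" using True by (simp add: om_def)
      have "z = of_int u + of_int Y * om m"
        unfolding za Xu omm by (simp add: field_simps)
      thus ?thesis by (metis ZK_intI)
    next
      case False
      hence "int m mod 4 = 1 \<or> int m mod 4 = 2" using m4 by presburger
      from par12[OF this dv] obtain u v where u: "X = 2 * u" and v: "Y = 2 * v" by blast
      have "z = of_int u + of_int v * om m"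
        unfolding za om_def u v using False by simp
      thus ?thesis by (metis ZK_intI)
    qed
  qed
qed

lemma qr_carrier [simp]: "carrier (quad_ring m) = quad_ints m"
  and qr_mult [simp]: "x \<otimes>\<^bsub>quad_ring m\<^esub> y = x * y"
  and qr_add [simp]: "x \<oplus>\<^bsub>quad_ring m\<^esub> y = x + y"
  and qr_zero [simp]: "\<zero>\<^bsub>quad_ring m\<^esub> = 0"
  and qr_one [simp]: "\<one>\<^bsub>quad_ring m\<^esub> = 1"
  by (simp_all add: quad_ring_def)

lemma cring_qr:
  assumes hZ: "quad_ints m = ZK m"
  shows "cring (quad_ring m)"
proof (rule cringI)
  show "abelian_group (quad_ring m)"
  proof (rule abelian_groupI)
    show "\<And>x. x \<in> carrier (quad_ring m) \<Longrightarrow> \<exists>y\<in>carrier (quad_ring m). y \<oplus>\<^bsub>quad_ring m\<^esub> x = \<zero>\<^bsub>quad_ring m\<^esub>"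
      unfolding hZ qr_carrier qr_add qr_zero by (rule bexI[of _ "- _"]) (auto intro: ZK_uminus)
  qed (auto simp: hZ intro: ZK_add)
  show "comm_monoid (quad_ring m)"
    by (rule comm_monoidI) (auto simp: hZ intro: ZK_mult)
qed (simp add: algebra_simps)

lemma ainv_qr:
  assumes hZ: "quad_ints m = ZK m" and x: "x \<in> ZK m"
  shows "\<ominus>\<^bsub>quad_ring m\<^esub> x = - x"
proof -
  interpret cring "quad_ring m" by (rule cring_qr[OF hZ])
  show ?thesis by (rule minus_equality) (auto simp: hZ x intro: ZK_uminus)
qed

lemma ideal_qr:
  assumes hZ: "quad_ints m = ZK m"
    and sub: "I \<subseteq> ZK m" and z: "0 \<in> I"
    and ad: "\<And>x y. x \<in> I \<Longrightarrow> y \<in> I \<Longrightarrow> x + y \<in> I"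
    and ng: "\<And>x. x \<in> I \<Longrightarrow> - x \<in> I"
    and ab: "\<And>x y. x \<in> I \<Longrightarrow> y \<in> ZK m \<Longrightarrow> y * x \<in> I"
  shows "ideal I (quad_ring m)"
proof (rule idealI)
  interpret cring "quad_ring m" by (rule cring_qr[OF hZ])
  show "ring (quad_ring m)" by (rule cring.axioms(1)[OF cring_qr[OF hZ]])
  show "subgroup I (add_monoid (quad_ring m))"
  proof
    show "I \<subseteq> carrier (add_monoid (quad_ring m))" using sub hZ by simp
    show "\<And>x y. x \<in> I \<Longrightarrow> y \<in> I \<Longrightarrow> x \<otimes>\<^bsub>add_monoid (quad_ring m)\<^esub> y \<in> I" using ad by simp
    show "\<one>\<^bsub>add_monoid (quad_ring m)\<^esub> \<in> I" using z by simp
    fix x assume xI: "x \<in> I"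
    have "inv\<^bsub>add_monoid (quad_ring m)\<^esub> x = \<ominus>\<^bsub>quad_ring m\<^esub> x" by (simp add: a_inv_def)
    also have "\<dots> = - x" using ainv_qr[OF hZ] xI sub by auto
    finally show "inv\<^bsub>add_monoid (quad_ring m)\<^esub> x \<in> I" using ng xI by simp
  qed
  show "\<And>a x. a \<in> I \<Longrightarrow> x \<in> carrier (quad_ring m) \<Longrightarrow> x \<otimes>\<^bsub>quad_ring m\<^esub> a \<in> I"
    using ab hZ by simp
  show "\<And>a x. a \<in> I \<Longrightarrow> x \<in> carrier (quad_ring m) \<Longrightarrow> a \<otimes>\<^bsub>quad_ring m\<^esub> x \<in> I"
    using ab hZ by (simp add: mult.commute)
qed

lemma primeideal_qr:
  assumes hZ: "quad_ints m = ZK m" and I: "ideal I (quad_ring m)" and one: "1 \<notin> I"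
    and pr: "\<And>a b. a \<in> ZK m \<Longrightarrow> b \<in> ZK m \<Longrightarrow> a * b \<in> I \<Longrightarrow> a \<in> I \<or> b \<in> I"
  shows "primeideal I (quad_ring m)"
proof (rule primeidealI[OF I cring_qr[OF hZ]])
  show "carrier (quad_ring m) \<noteq> I" using one hZ by auto
qed (use pr hZ in auto)

definition ipow :: "nat \<Rightarrow> complex set \<Rightarrow> nat \<Rightarrow> complex set" where
  "ipow m q k = q [^]\<^bsub>ideals_set (quad_ring m)\<^esub> k"

lemma ipow_0: "ipow m q 0 = quad_ints m"
  unfolding ipow_def by (simp add: ideals_set_def)

lemma ipow_Suc: "ipow m q (Suc k) = ideal_prod (quad_ring m) (ipow m q k) q"
  unfolding ipow_def by (simp add: ideals_set_def)

lemma ipow_ideal: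
  assumes hZ: "quad_ints m = ZK m" and q: "ideal q (quad_ring m)"
  shows "ideal (ipow m q k) (quad_ring m)"
proof (induction k)
  interpret cring "quad_ring m" by (rule cring_qr[OF hZ])
  case 0 show ?case unfolding ipow_0 using oneideal by simp
next
  interpret cring "quad_ring m" by (rule cring_qr[OF hZ])
  case (Suc k) show ?case unfolding ipow_Suc by (rule ideal_prod_is_ideal[OF Suc q])
qed

lemma ipow_prodI: "x \<in> ipow m q k \<Longrightarrow> y \<in> q \<Longrightarrow> x * y \<in> ipow m q (Suc k)"
  unfolding ipow_Suc using ideal_prod.prod[of x "ipow m q k" y q "quad_ring m"] by simp

lemma ideal_addI: "ideal I R \<Longrightarrow> x \<in> I \<Longrightarrow> y \<in> I \<Longrightarrow> x \<oplus>\<^bsub>R\<^esub> y \<in> I"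
  by (meson additive_subgroup.a_closed ideal.axioms(1))

lemma ideal_multI: "ideal I R \<Longrightarrow> x \<in> I \<Longrightarrow> y \<in> carrier R \<Longrightarrow> y \<otimes>\<^bsub>R\<^esub> x \<in> I"
  by (meson ideal.I_l_closed)

lemma ipow_abs:
  assumes hZ: "quad_ints m = ZK m" and q: "ideal q (quad_ring m)"
  shows "x \<in> ipow m q k \<Longrightarrow> y \<in> ZK m \<Longrightarrow> y * x \<in> ipow m q k"
  using ideal_multI[OF ipow_ideal[OF hZ q, of k], of x y] hZ by simp

lemma ipow_add:
  assumes hZ: "quad_ints m = ZK m" and q: "ideal q (quad_ring m)"
  shows "x \<in> ipow m q k \<Longrightarrow> y \<in> ipow m q k \<Longrightarrow> x + y \<in> ipow m q k"
  using ideal_addI[OF ipow_ideal[OF hZ q, of k], of x y] by simp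

lemma ipow_mult:
  assumes hZ: "quad_ints m = ZK m" and q: "ideal q (quad_ring m)"
  shows "x \<in> ipow m q i \<Longrightarrow> y \<in> ipow m q j \<Longrightarrow> x * y \<in> ipow m q (i + j)"
proof (induction j arbitrary: y)
  case 0
  then show ?case using ipow_abs[OF hZ q, of x i y] unfolding ipow_0 hZ by (simp add: mult.commute)
next
  case (Suc j)
  from Suc.prems(2) have "y \<in> ideal_prod (quad_ring m) (ipow m q j) q" unfolding ipow_Suc .
  then show ?case
  proof (induction y rule: ideal_prod.induct)
    case (prod i' j')
    have "x * i' \<in> ipow m q (i + j)" using Suc.IH Suc.prems(1) prod(1) by blast
    hence "(x * i') * j' \<in> ipow m q (Suc (i + j))" using prod(2) by (rule ipow_prodI)
    thus ?case by (simp add: mult.assoc)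
  next
    case (sum s1 s2)
    thus ?case using ipow_add[OF hZ q] by (simp add: distrib_left)
  qed
qed

lemma ipow_mono:
  assumes hZ: "quad_ints m = ZK m" and q: "ideal q (quad_ring m)" and le: "j \<le> k"
  shows "ipow m q k \<subseteq> ipow m q j"
  using le
proof (induction k)
  case 0 thus ?case by simp
next
  interpret cring "quad_ring m" by (rule cring_qr[OF hZ])
  case (Suc k)
  have "ipow m q (Suc k) \<subseteq> ipow m q k"
    unfolding ipow_Suc using ideal_prod_inter[OF ipow_ideal[OF hZ q] q] by blast
  thus ?case using Suc by (cases "j = Suc k") auto
qed

lemma ipow_one: "x \<in> q \<Longrightarrow> quad_ints m = ZK m \<Longrightarrow> x \<in> ipow m q 1"
  using ipow_prodI[of 1 m q 0 x] by (simp add: ipow_0)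

lemma ipow_power:
  assumes hZ: "quad_ints m = ZK m" and x: "x \<in> q"
  shows "x ^ k \<in> ipow m q k"
proof (induction k)
  case 0 then show ?case by (simp add: ipow_0 hZ)
next
  case (Suc k) then show ?case using ipow_prodI[OF Suc x] by (simp add: mult.commute)
qed

lemma ipow_bound:
  assumes hZ: "quad_ints m = ZK m"
    and sg: "\<And>x. x \<in> q \<Longrightarrow> \<exists>w \<in> ZK m. s * x = of_int p * w"
  shows "x \<in> ipow m q k \<Longrightarrow> \<exists>w \<in> ZK m. s ^ k * x = of_int p ^ k * w"
proof (induction k arbitrary: x)
  case 0 thus ?case by (simp add: ipow_0 hZ)
next
  case (Suc k)
  from Suc.prems have "x \<in> ideal_prod (quad_ring m) (ipow m q k) q" unfolding ipow_Suc .
  then show ?case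
  proof (induction x rule: ideal_prod.induct)
    case (prod y z)
    obtain w1 where w1: "w1 \<in> ZK m" "s ^ k * y = of_int p ^ k * w1" using Suc.IH prod(1) by blast
    obtain w2 where w2: "w2 \<in> ZK m" "s * z = of_int p * w2" using sg prod(2) by blast
    have "s ^ Suc k * (y \<otimes>\<^bsub>quad_ring m\<^esub> z) = (s ^ k * y) * (s * z)" by (simp add: algebra_simps)
    also have "\<dots> = of_int p ^ Suc k * (w1 * w2)" unfolding w1(2) w2(2) by (simp add: algebra_simps)
    finally show ?case using ZK_mult[OF w1(1) w2(1)] by blast
  next
    case (sum s1 s2)
    then obtain w1 w2 where "w1 \<in> ZK m" "s ^ Suc k * s1 = of_int p ^ Suc k * w1"
      "w2 \<in> ZK m" "s ^ Suc k * s2 = of_int p ^ Suc k * w2" by blast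
    hence "s ^ Suc k * (s1 \<oplus>\<^bsub>quad_ring m\<^esub> s2) = of_int p ^ Suc k * (w1 + w2)"
      by (simp add: algebra_simps)
    thus ?case using ZK_add \<open>w1 \<in> ZK m\<close> \<open>w2 \<in> ZK m\<close> by blast
  qed
qed

lemma Im_om: "m > 0 \<Longrightarrow> Im (om m) \<noteq> 0"
  unfolding om_def by (auto simp: Im_sn)

lemma coords_ZK:
  assumes "m > 0" "of_int u + of_int v * om m = of_int u' + of_int v' * om m"
  shows "u = u' \<and> v = v'"
proof -
  from assms(2) have "Im (of_int u + of_int v * om m) = Im (of_int u' + of_int v' * om m)" by simp
  hence "of_int v * Im (om m) = of_int v' * Im (om m)" by simp
  hence vv: "v = v'" using Im_om[OF assms(1)] by simp
  with assms(2) have "(of_int u :: complex) = of_int u'" by simp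
  with vv show ?thesis by simp
qed

lemma mult_coords: "(of_int u1 + of_int v1 * om m) * (of_int u2 + of_int v2 * om m)
  = of_int (u1*u2 - nw m * v1 * v2) + of_int (u1*v2 + u2*v1 + dl m * v1 * v2) * om m"
proof -
  have "(of_int u1 + of_int v1 * om m) * (of_int u2 + of_int v2 * om m) = of_int u1 * of_int u2 + (of_int u1 * of_int v2 + of_int u2 * of_int v1) * om m
       + of_int v1 * of_int v2 * (om m * om m)" by (simp add: algebra_simps)
  also have "\<dots> = of_int (u1*u2 - nw m * v1 * v2) + of_int (u1*v2 + u2*v1 + dl m * v1 * v2) * om m"
    unfolding om_sq by (simp add: algebra_simps)
  finally show ?thesis .
qed

definition fp :: "nat \<Rightarrow> int \<Rightarrow> int" where "fp m r = r^2 + dl m * r + nw m"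

lemma norm_r_om: "(of_int r + om m) * cnj (of_int r + om m) = of_int (fp m r)"
  using ZK_norm[of r 1 m] unfolding fp_def by (simp add: algebra_simps)

lemma L_mult: "(u1*u2 - nw m * v1 * v2) - r * (u1*v2 + u2*v1 + dl m * v1 * v2)
   = (u1 - r * v1) * (u2 - r * v2) - v1 * v2 * fp m r"
  unfolding fp_def by (simp add: algebra_simps power2_eq_square)

definition qI :: "nat \<Rightarrow> int \<Rightarrow> int \<Rightarrow> complex set" where
  "qI m p r = {of_int u + of_int v * om m | u v. p dvd u - r * v}"

lemma qI_mem: "m > 0 \<Longrightarrow> of_int u + of_int v * om m \<in> qI m p r \<longleftrightarrow> p dvd u - r * v"
  unfolding qI_def using coords_ZK by blast

lemma sn_ZK: "sqrt_neg m \<in> ZK m"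
proof (cases "m mod 4 = 3")
  case True
  hence "sqrt_neg m = of_int (-1) + of_int 2 * om m" unfolding om_def by (simp add: field_simps)
  then show ?thesis by (metis ZK_intI)
next
  case False
  hence "sqrt_neg m = of_int 0 + of_int 1 * om m" unfolding om_def by simp
  then show ?thesis by (metis ZK_intI)
qed

lemma prime_qI:
  fixes p r :: int
  assumes m: "m > 0" and hZ: "quad_ints m = ZK m" and p: "prime p" and fr: "p dvd fp m r"
  shows "primeideal (qI m p r) (quad_ring m)"
proof (rule primeideal_qr[OF hZ])
  have sub: "qI m p r \<subseteq> ZK m" unfolding qI_def using ZK_intI by blast
  show "ideal (qI m p r) (quad_ring m)"
  proof (rule ideal_qr[OF hZ sub])
    show "0 \<in> qI m p r" using qI_mem[OF m, of 0 0 p r] by simp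
    fix x y assume "x \<in> qI m p r"
    then obtain u1 v1 where x: "x = of_int u1 + of_int v1 * om m" and d1: "p dvd u1 - r * v1"
      unfolding qI_def by blast
    show "- x \<in> qI m p r"
    proof -
      have "- x = of_int (- u1) + of_int (- v1) * om m" unfolding x by simp
      moreover have "(- u1) - r * (- v1) = - (u1 - r * v1)" by simp
      hence "p dvd (- u1) - r * (- v1)" using d1 by (simp only: dvd_minus_iff)
      ultimately show ?thesis using qI_mem[OF m] by metis
    qed
    {
      assume "y \<in> qI m p r"
      then obtain u2 v2 where y: "y = of_int u2 + of_int v2 * om m" and d2: "p dvd u2 - r * v2"
        unfolding qI_def by blast
      have xy: "x + y = of_int (u1 + u2) + of_int (v1 + v2) * om m" unfolding x y by (simp add: algebra_simps)
      have eqs: "(u1 + u2) - r * (v1 + v2) = (u1 - r * v1) + (u2 - r * v2)" by (simp add: algebra_simps)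
      have "p dvd (u1 + u2) - r * (v1 + v2)" unfolding eqs by (rule dvd_add[OF d1 d2])
      thus "x + y \<in> qI m p r" unfolding xy using qI_mem[OF m] by blast
    }
    {
      assume "y \<in> ZK m"
      then obtain u2 v2 where y: "y = of_int u2 + of_int v2 * om m" unfolding ZK_iff by blast
      have e: "y * x = of_int (u2*u1 - nw m * v2 * v1) + of_int (u2*v1 + u1*v2 + dl m * v2 * v1) * om m"
        unfolding x y by (rule mult_coords)
      have "p dvd (u2 - r * v2) * (u1 - r * v1) - v2 * v1 * fp m r" using d1 fr by simp
      hence "p dvd (u2*u1 - nw m * v2 * v1) - r * (u2*v1 + u1*v2 + dl m * v2 * v1)"
        unfolding L_mult .
      thus "y * x \<in> qI m p r" unfolding e using qI_mem[OF m] by blast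
    }
  qed
  show "1 \<notin> qI m p r"
  proof
    assume "1 \<in> qI m p r"
    hence "p dvd 1 - r * 0" using qI_mem[OF m, of 1 0 p r] by simp
    hence "p dvd 1" by simp
    thus False using p not_prime_unit by blast
  qed
  fix a b assume a: "a \<in> ZK m" and b: "b \<in> ZK m" and ab: "a * b \<in> qI m p r"
  obtain u1 v1 where x: "a = of_int u1 + of_int v1 * om m" using a unfolding ZK_iff by blast
  obtain u2 v2 where y: "b = of_int u2 + of_int v2 * om m" using b unfolding ZK_iff by blast
  have e: "a * b = of_int (u1*u2 - nw m * v1 * v2) + of_int (u1*v2 + u2*v1 + dl m * v1 * v2) * om m"
    unfolding x y by (rule mult_coords)
  have "p dvd (u1*u2 - nw m * v1 * v2) - r * (u1*v2 + u2*v1 + dl m * v1 * v2)"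
    using ab unfolding e using qI_mem[OF m] by blast
  hence "p dvd (u1 - r * v1) * (u2 - r * v2) - v1 * v2 * fp m r" unfolding L_mult .
  moreover have "p dvd v1 * v2 * fp m r" using fr by simp
  ultimately have "p dvd ((u1 - r * v1) * (u2 - r * v2) - v1 * v2 * fp m r) + v1 * v2 * fp m r"
    by (rule dvd_add)
  hence "p dvd (u1 - r * v1) * (u2 - r * v2)" by simp
  hence "p dvd (u1 - r * v1) \<or> p dvd (u2 - r * v2)" using p by (simp add: prime_dvd_mult_iff)
  thus "a \<in> qI m p r \<or> b \<in> qI m p r" unfolding x y using qI_mem[OF m] by blast
qed

lemma qI_p: "m > 0 \<Longrightarrow> of_int p \<in> qI m p r"
  using qI_mem[of m p 0 p r] by simp

lemma qI_sigma:
  fixes p r :: int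
  assumes m: "m > 0" and fr: "p dvd fp m r" and x: "x \<in> qI m p r"
  shows "\<exists>w \<in> ZK m. cnj (of_int r + om m) * x = of_int p * w"
proof -
  obtain u v where xe: "x = of_int u + of_int v * om m" and d: "p dvd u - r * v"
    using x unfolding qI_def by blast
  obtain t where t: "u - r * v = p * t" using d by blast
  obtain f' where f': "fp m r = p * f'" using fr by blast
  define sg where "sg = cnj (of_int r + om m)"
  have sgZ: "sg \<in> ZK m" unfolding sg_def by (intro ZK_cnj ZK_add) auto
  have "x = of_int (p * t) + of_int v * (of_int r + om m)"
    unfolding xe t[symmetric] by (simp add: algebra_simps)
  hence "sg * x = of_int p * (of_int t * sg) + of_int v * ((of_int r + om m) * sg)"
    by (simp add: algebra_simps)
  also have "(of_int r + om m) * sg = of_int (p * f')" unfolding sg_def norm_r_om f' ..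
  finally have "sg * x = of_int p * (of_int t * sg + of_int (v * f'))" by (simp add: algebra_simps)
  moreover have "of_int t * sg + of_int (v * f') \<in> ZK m" by (rule ZK_add[OF ZK_mult[OF ZK_of_int sgZ] ZK_of_int])
  ultimately show ?thesis unfolding sg_def by blast
qed

lemma norm_dvd_II:
  fixes p u v :: int
  assumes p: "prime p" and nr: "\<And>r. \<not> p dvd fp m r" and N: "p dvd u^2 + dl m * u * v + nw m * v^2"
  shows "p dvd u \<and> p dvd v"
proof (cases "p dvd v")
  case True
  then obtain t where t: "v = p * t" by blast
  have "u^2 = (u^2 + dl m * u * v + nw m * v^2) - p * (dl m * u * t + nw m * p * t^2)"
    unfolding t by (simp add: algebra_simps power2_eq_square)
  hence "p dvd u^2" using N by (metis dvd_diff dvd_triv_left)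
  hence "p dvd u" using p prime_dvd_power by blast
  with True show ?thesis by simp
next
  case False
  hence "coprime v p" using p by (simp add: prime_imp_coprime coprime_commute)
  hence "gcd v p = 1" by simp
  then obtain a b where ab: "a * v + b * p = 1" using bezout_int[of v p] by metis
  have e: "v^2 * fp m (u*a) - (u^2 + dl m * u * v + nw m * v^2) = (a*v - 1) * (u^2*(a*v+1) + dl m * u * v)"
    unfolding fp_def by (simp add: algebra_simps power2_eq_square)
  have "a * v - 1 = p * (- b)" using ab by (simp add: algebra_simps)
  hence "p dvd v^2 * fp m (u*a) - (u^2 + dl m * u * v + nw m * v^2)" unfolding e by simp
  hence "p dvd (v^2 * fp m (u*a) - (u^2 + dl m * u * v + nw m * v^2)) + (u^2 + dl m * u * v + nw m * v^2)"
    using N by (rule dvd_add)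
  hence "p dvd v^2 * fp m (u*a)" by simp
  hence "p dvd v^2 \<or> p dvd fp m (u*a)" using p by (simp add: prime_dvd_mult_iff)
  hence "p dvd v" using nr p prime_dvd_power by blast
  with False show ?thesis by simp
qed

lemma sqf_int: assumes "squarefree m" "prime (p::int)" "p^2 dvd int m" shows False
proof -
  have "p > 1" using assms(2) prime_gt_1_int by blast
  hence "int ((nat p)^2) = p^2" by simp
  hence "(nat p)^2 dvd m" using assms(3) by (metis int_dvd_int_iff)
  hence "is_unit (nat p)" using assms(1) squarefreeD by blast
  thus False using \<open>p > 1\<close> by simp
qed

lemma good_r:
  fixes p r :: int
  assumes m: "m > 0" and sq: "squarefree m" and p: "prime p" and fr: "p dvd fp m r"
  shows "\<exists>r'. p dvd fp m r' \<and> \<not> p^2 dvd fp m r'"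
proof (rule ccontr)
  assume "\<not> ?thesis"
  hence H: "\<And>r'. p dvd fp m r' \<Longrightarrow> p^2 dvd fp m r'" by blast
  have p2: "p^2 dvd fp m r" using H[OF fr] .
  have e1: "fp m (r + p) = fp m r + p * (2 * r + dl m + p)"
    unfolding fp_def by (simp add: algebra_simps power2_eq_square)
  have "p dvd fp m (r + p)" unfolding e1 using fr by simp
  hence "p^2 dvd fp m (r + p)" by (rule H)
  hence "p^2 dvd fp m (r + p) - fp m r" using p2 by (rule dvd_diff)
  hence "p * p dvd p * (2 * r + dl m + p)" unfolding e1 by (simp add: power2_eq_square)
  hence "p dvd 2 * r + dl m + p" using p by (simp add: prime_gt_0_int)
  hence d: "p dvd 2 * r + dl m" by (metis add_diff_cancel_right' dvd_diff dvd_refl)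
  have m4: "m mod 4 \<noteq> 0" by (rule sqf_mod4[OF sq])
  show False
  proof (cases "m mod 4 = 3")
    case True
    hence "int m + 1 = 4 * ((int m + 1) div 4)" by presburger
    hence "4 * fp m r = (2 * r + 1)^2 + int m"
      using True unfolding fp_def dl_def nw_def by (simp add: algebra_simps power2_eq_square)
    moreover have "p^2 dvd 4 * fp m r" using p2 by simp
    moreover have "p^2 dvd (2 * r + 1)^2" using d True unfolding dl_def by simp
    ultimately have "p^2 dvd int m" by (metis add_diff_cancel_left' dvd_diff)
    thus False using sqf_int[OF sq p] by blast
  next
    case False
    hence f: "fp m r = r^2 + int m" unfolding fp_def dl_def nw_def by simp
    show False
    proof (cases "p = 2")
      case True
      hence "4 dvd r^2 + int m" using p2 f by simp
      hence "(r^2 + int m) mod 4 = 0" by simp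
      moreover have "(r^2 + int m) mod 4 = (r^2 mod 4 + int m mod 4) mod 4" by (simp add: mod_add_eq)
      moreover have "int m mod 4 = 1 \<or> int m mod 4 = 2" using False m4 by presburger
      ultimately show False unfolding sq_mod4 by (auto split: if_splits)
    next
      case False
      have "coprime p 2" using primes_coprime[OF p _ False] two_is_prime by blast
      hence cp: "coprime (p^2) 4" by (metis coprime_power_left_iff coprime_power_right_iff power2_eq_square num_double numeral_times_numeral power2_eq_square)
      have "4 * fp m r = (2 * r)^2 + 4 * int m" unfolding f by (simp add: algebra_simps power2_eq_square)
      moreover have "p^2 dvd 4 * fp m r" using p2 by simp
      moreover have "p dvd 2 * r" using d \<open>\<not> m mod 4 = 3\<close> unfolding dl_def by simp
      hence "p^2 dvd (2 * r)^2" by (rule dvd_power_same)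
      ultimately have "p^2 dvd 4 * int m" by (metis add_diff_cancel_left' dvd_diff)
      hence "p^2 dvd int m" using cp coprime_dvd_mult_right_iff by blast
      thus False using sqf_int[OF sq p] by blast
    qed
  qed
qed

definition qII :: "nat \<Rightarrow> int \<Rightarrow> complex set" where
  "qII m p = {of_int u + of_int v * om m | u v. p dvd u \<and> p dvd v}"

lemma qII_mem: "m > 0 \<Longrightarrow> of_int u + of_int v * om m \<in> qII m p \<longleftrightarrow> p dvd u \<and> p dvd v"
  unfolding qII_def using coords_ZK by blast

lemma ZK_normI: "x \<in> ZK m \<Longrightarrow> \<exists>N. x * cnj x = of_int N"
  unfolding ZK_iff using ZK_norm by blast

lemma prime_qII:
  fixes p :: int
  assumes m: "m > 0" and hZ: "quad_ints m = ZK m" and p: "prime p" and nr: "\<And>r. \<not> p dvd fp m r"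
  shows "primeideal (qII m p) (quad_ring m)"
proof (rule primeideal_qr[OF hZ])
  have sub: "qII m p \<subseteq> ZK m" unfolding qII_def using ZK_intI by blast
  show "ideal (qII m p) (quad_ring m)"
  proof (rule ideal_qr[OF hZ sub])
    show "0 \<in> qII m p" using qII_mem[OF m, of 0 0 p] by simp
    fix x y assume "x \<in> qII m p"
    then obtain u1 v1 where x: "x = of_int u1 + of_int v1 * om m" and d1: "p dvd u1" "p dvd v1"
      unfolding qII_def by blast
    show "- x \<in> qII m p"
    proof -
      have "- x = of_int (- u1) + of_int (- v1) * om m" unfolding x by simp
      thus ?thesis using qII_mem[OF m] d1 by (metis dvd_minus_iff)
    qed
    {
      assume "y \<in> qII m p"
      then obtain u2 v2 where y: "y = of_int u2 + of_int v2 * om m" and d2: "p dvd u2" "p dvd v2"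
        unfolding qII_def by blast
      have xy: "x + y = of_int (u1 + u2) + of_int (v1 + v2) * om m" unfolding x y by (simp add: algebra_simps)
      have "p dvd u1 + u2 \<and> p dvd v1 + v2" using d1 d2 by simp
      thus "x + y \<in> qII m p" unfolding xy using qII_mem[OF m] by blast
    }
    {
      assume "y \<in> ZK m"
      then obtain u2 v2 where y: "y = of_int u2 + of_int v2 * om m" unfolding ZK_iff by blast
      have e: "y * x = of_int (u2*u1 - nw m * v2 * v1) + of_int (u2*v1 + u1*v2 + dl m * v2 * v1) * om m"
        unfolding x y by (rule mult_coords)
      have "p dvd (u2*u1 - nw m * v2 * v1)" "p dvd (u2*v1 + u1*v2 + dl m * v2 * v1)" using d1 by simp_all
      thus "y * x \<in> qII m p" unfolding e using qII_mem[OF m] by blast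
    }
  qed
  show "1 \<notin> qII m p"
  proof
    assume "1 \<in> qII m p"
    hence "p dvd 1 \<and> p dvd 0" using qII_mem[OF m, of 1 0 p] by simp
    thus False using p not_prime_unit by blast
  qed
  fix a b assume a: "a \<in> ZK m" and b: "b \<in> ZK m" and ab: "a * b \<in> qII m p"
  obtain u1 v1 where x: "a = of_int u1 + of_int v1 * om m" using a unfolding ZK_iff by blast
  obtain u2 v2 where y: "b = of_int u2 + of_int v2 * om m" using b unfolding ZK_iff by blast
  obtain P1 P2 where e: "a * b = of_int P1 + of_int P2 * om m" and dP: "p dvd P1" "p dvd P2"
    using ab unfolding qII_def by blast
  obtain t1 t2 where t: "P1 = p * t1" "P2 = p * t2" using dP by blast
  obtain Nw where Nw: "(of_int t1 + of_int t2 * om m) * cnj (of_int t1 + of_int t2 * om m) = of_int Nw"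
    using ZK_normI[OF ZK_intI] by blast
  have "(a * cnj a) * (b * cnj b) = (a * b) * cnj (a * b)" by (simp add: algebra_simps)
  also have "a * b = of_int p * (of_int t1 + of_int t2 * om m)" unfolding e t by (simp add: algebra_simps)
  also have "(of_int p * (of_int t1 + of_int t2 * om m)) * cnj (of_int p * (of_int t1 + of_int t2 * om m))
     = of_int p * of_int p * ((of_int t1 + of_int t2 * om m) * cnj (of_int t1 + of_int t2 * om m))"
    by (simp only: complex_cnj_mult complex_cnj_of_int mult_ac)
  also have "\<dots> = of_int (p^2 * Nw)" unfolding Nw by (simp add: power2_eq_square)
  finally have "of_int ((u1^2 + dl m * u1 * v1 + nw m * v1^2) * (u2^2 + dl m * u2 * v2 + nw m * v2^2)) = (of_int (p^2 * Nw) :: complex)"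
    unfolding x y ZK_norm by simp
  hence "(u1^2 + dl m * u1 * v1 + nw m * v1^2) * (u2^2 + dl m * u2 * v2 + nw m * v2^2) = p^2 * Nw"
    by (simp only: of_int_eq_iff)
  hence "p dvd (u1^2 + dl m * u1 * v1 + nw m * v1^2) * (u2^2 + dl m * u2 * v2 + nw m * v2^2)"
    by (metis dvd_mult2 dvd_refl power2_eq_square)
  hence "p dvd (u1^2 + dl m * u1 * v1 + nw m * v1^2) \<or> p dvd (u2^2 + dl m * u2 * v2 + nw m * v2^2)"
    using p by (simp add: prime_dvd_mult_iff)
  hence "(p dvd u1 \<and> p dvd v1) \<or> (p dvd u2 \<and> p dvd v2)" using norm_dvd_II[OF p nr] by blast
  thus "a \<in> qII m p \<or> b \<in> qII m p" unfolding x y using qII_mem[OF m] by blast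
qed

lemma prime_above:
  fixes p :: int
  assumes m: "m > 0" and sq: "squarefree m" and hZ: "quad_ints m = ZK m" and p: "prime p"
  obtains q sg Ns where "primeideal q (quad_ring m)" "of_int p \<in> q" "sg \<in> ZK m"
    "\<And>x. x \<in> q \<Longrightarrow> \<exists>w \<in> ZK m. sg * x = of_int p * w"
    "sg * cnj sg = of_int Ns" "\<not> p^2 dvd Ns"
proof (cases "\<exists>r. p dvd fp m r")
  case True
  then obtain r0 where "p dvd fp m r0" by blast
  then obtain r where fr: "p dvd fp m r" and nf: "\<not> p^2 dvd fp m r" using good_r[OF m sq p] by blast
  show ?thesis
  proof (rule that[of "qI m p r" "cnj (of_int r + om m)" "fp m r"])
    show "primeideal (qI m p r) (quad_ring m)" by (rule prime_qI[OF m hZ p fr])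
    show "of_int p \<in> qI m p r" by (rule qI_p[OF m])
    show "cnj (of_int r + om m) \<in> ZK m" by (intro ZK_cnj ZK_add) auto
    show "\<And>x. x \<in> qI m p r \<Longrightarrow> \<exists>w \<in> ZK m. cnj (of_int r + om m) * x = of_int p * w"
      by (rule qI_sigma[OF m fr])
    show "cnj (of_int r + om m) * cnj (cnj (of_int r + om m)) = of_int (fp m r)"
      using norm_r_om[of r m] by (simp add: mult.commute)
  qed (rule nf)
next
  case False
  show ?thesis
  proof (rule that[of "qII m p" 1 1])
    show "primeideal (qII m p) (quad_ring m)" by (rule prime_qII[OF m hZ p]) (use False in blast)
    show "of_int p \<in> qII m p" using qII_mem[OF m, of p 0 p] by simp
    show "\<And>x. x \<in> qII m p \<Longrightarrow> \<exists>w \<in> ZK m. 1 * x = of_int p * w"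
    proof -
      fix x assume "x \<in> qII m p"
      then obtain u v where x: "x = of_int u + of_int v * om m" and d: "p dvd u" "p dvd v"
        unfolding qII_def by blast
      then obtain a b where "u = p * a" "v = p * b" by blast
      hence "1 * x = of_int p * (of_int a + of_int b * om m)" unfolding x by (simp add: algebra_simps)
      thus "\<exists>w \<in> ZK m. 1 * x = of_int p * w" using ZK_intI by blast
    qed
    show "\<not> p^2 dvd 1" using p by (metis not_prime_unit is_unit_power_iff power2_eq_square zero_neq_numeral dvd_mult_left one_dvd)
  qed auto
qed

lemma val_lemma:
  fixes p A B g :: int and l n m :: nat
  assumes p: "prime p" and ol: "odd l" and n: "n > 0" and m: "m > 0" and sq: "squarefree m"
    and g: "g \<noteq> 0" and B: "B > 0" and cp: "coprime A B"
    and eq: "A^l * (int n^2 * int m) = B^l * (int n^2 * int m + g^2)"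
    and lt: "multiplicity p g < multiplicity p (int n * int m)"
  shows "(\<not> p dvd int m \<and> l \<le> multiplicity p (int n)) \<or> (p dvd int m \<and> l \<le> 2 * multiplicity p (int n) + 1)"
proof -
  have pe: "prime_elem p" using p by (rule prime_imp_prime_elem)
  define a where "a = multiplicity p (int n)"
  define mu where "mu = multiplicity p (int m)"
  define gg where "gg = multiplicity p g"
  have nz: "int n \<noteq> 0" "int m \<noteq> 0" using n m by auto
  have mu1: "mu \<le> 1"
  proof (rule ccontr)
    assume "\<not> mu \<le> 1"
    hence "p^2 dvd int m" unfolding mu_def by (intro multiplicity_dvd') simp
    thus False using sqf_int[OF sq p] by blast
  qed
  have nm: "multiplicity p (int n * int m) = a + mu"
    unfolding a_def mu_def by (rule prime_elem_multiplicity_mult_distrib[OF pe nz])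
  define X where "X = int n^2 * int m"
  have Xnz: "X \<noteq> 0" unfolding X_def using nz by simp
  have mX: "multiplicity p X = 2 * a + mu"
  proof -
    have "multiplicity p X = multiplicity p (int n^2) + multiplicity p (int m)"
      unfolding X_def by (rule prime_elem_multiplicity_mult_distrib[OF pe]) (use nz in auto)
    also have "multiplicity p (int n^2) = 2 * a"
      unfolding a_def by (rule prime_elem_multiplicity_power_distrib[OF pe nz(1)])
    finally show ?thesis unfolding mu_def by simp
  qed
  have mY: "multiplicity p (g^2) = 2 * gg"
    unfolding gg_def by (rule prime_elem_multiplicity_power_distrib[OF pe g])
  have ggl: "gg < a + mu" using lt nm unfolding gg_def by simp
  hence lt2: "2 * gg < 2 * a + mu" using mu1 by linarith
  have mS: "multiplicity p (X + g^2) = 2 * gg"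
  proof -
    have "multiplicity p (g^2 + X) = multiplicity p (g^2)"
      by (rule multiplicity_sum_lt) (use mX mY lt2 Xnz g in auto)
    thus ?thesis using mY by (simp add: add.commute)
  qed
  have Snz: "X + g^2 \<noteq> 0"
  proof -
    have "X > 0" unfolding X_def using n m by simp
    moreover have "g^2 \<ge> 0" by simp
    ultimately show ?thesis by linarith
  qed
  have Anz: "A \<noteq> 0"
  proof
    assume "A = 0"
    hence "B^l * (X + g^2) = 0" using eq ol unfolding X_def by (simp add: zero_power odd_pos)
    thus False using B Snz by simp
  qed
  have key: "l * multiplicity p A + (2 * a + mu) = l * multiplicity p B + 2 * gg"
  proof -
    have "multiplicity p (A^l * X) = multiplicity p (B^l * (X + g^2))" using eq unfolding X_def by simp
    moreover have "multiplicity p (A^l * X) = multiplicity p (A^l) + multiplicity p X"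
      by (rule prime_elem_multiplicity_mult_distrib[OF pe]) (use Anz Xnz in auto)
    moreover have "multiplicity p (B^l * (X + g^2)) = multiplicity p (B^l) + multiplicity p (X + g^2)"
      by (rule prime_elem_multiplicity_mult_distrib[OF pe]) (use B Snz in auto)
    moreover have "multiplicity p (A^l) = l * multiplicity p A"
      by (rule prime_elem_multiplicity_power_distrib[OF pe Anz])
    moreover have "multiplicity p (B^l) = l * multiplicity p B"
      by (rule prime_elem_multiplicity_power_distrib[OF pe]) (use B in auto)
    ultimately show ?thesis using mX mS by simp
  qed
  have mB: "multiplicity p B > 0"
  proof (rule ccontr)
    assume "\<not> ?thesis" hence "multiplicity p B = 0" by simp
    with key lt2 show False by simp
  qed
  hence "p dvd B" using prime_elem_multiplicity_eq_zero_iff[OF pe, of B] B by linarith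
  have "\<not> p dvd A"
  proof
    assume "p dvd A"
    hence "p dvd gcd A B" using \<open>p dvd B\<close> by simp
    hence "p dvd 1" using cp by simp
    thus False using p not_prime_unit by blast
  qed
  hence "multiplicity p A = 0" using prime_elem_multiplicity_eq_zero_iff[OF pe Anz] by simp
  hence key2: "2 * a + mu = l * multiplicity p B + 2 * gg" using key by simp
  show ?thesis
  proof (cases "mu = 0")
    case True
    hence nd: "\<not> p dvd int m" unfolding mu_def using prime_elem_multiplicity_eq_zero_iff[OF pe nz(2)] by simp
    from key2 True have "even (l * multiplicity p B)" by presburger
    hence "even (multiplicity p B)" using ol by simp
    then obtain k where k: "multiplicity p B = 2 * k" by blast
    with mB have "k \<ge> 1" by simp
    from key2 True k have "a = l * k + gg" by simp
    hence "l \<le> a" using \<open>k \<ge> 1\<close> by (metis le_add1 mult_le_mono2 nat_mult_1_right order_trans)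
    thus ?thesis using nd unfolding a_def by simp
  next
    case False
    hence mu: "mu = 1" using mu1 by simp
    hence d: "p dvd int m" unfolding mu_def using prime_elem_multiplicity_eq_zero_iff[OF pe nz(2)] by simp
    have "l \<le> l * multiplicity p B" using mB by simp
    hence "l \<le> 2 * a + 1" using key2 mu by linarith
    thus ?thesis using d unfolding a_def by simp
  qed
qed

lemma prime_ideal_ideal: "primeideal q R \<Longrightarrow> ideal q R"
  by (simp add: primeideal_def)

lemma ipow_powk:
  assumes hZ: "quad_ints m = ZK m" and q: "ideal q (quad_ring m)" and x: "x \<in> ipow m q j"
  shows "x ^ k \<in> ipow m q (j * k)"
proof (induction k)
  case 0 thus ?case by (simp add: ipow_0 hZ)
next
  case (Suc k)
  have "x ^ k * x \<in> ipow m q (j * k + j)" by (rule ipow_mult[OF hZ q Suc x])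
  thus ?case by (simp add: mult.commute add.commute)
qed

lemma ord_ge:
  fixes p Ns Nb :: int
  assumes hZ: "quad_ints m = ZK m" and p: "prime p"
    and sgP: "\<And>x. x \<in> q \<Longrightarrow> \<exists>w \<in> ZK m. sg * x = of_int p * w"
    and Ns: "sg * cnj sg = of_int Ns" "\<not> p^2 dvd Ns"
    and Nb: "b * cnj b = of_int Nb" "Nb \<noteq> 0"
    and bl: "b \<in> ipow m q l"
  shows "l \<le> ideal_ord (quad_ring m) q b"
proof -
  have nu: "\<not> is_unit p" using p not_prime_unit by blast
  have Nsz: "Ns \<noteq> 0" using Ns(2) by auto
  have ms: "multiplicity p Ns \<le> 1"
  proof (rule ccontr)
    assume "\<not> ?thesis"
    hence "p^2 dvd Ns" by (intro multiplicity_dvd') simp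
    thus False using Ns(2) by blast
  qed
  have bound: "k \<le> multiplicity p Nb" if k: "b \<in> ipow m q k" for k
  proof -
    obtain w where w: "w \<in> ZK m" "sg ^ k * b = of_int p ^ k * w" using ipow_bound[OF hZ sgP k] by blast
    obtain Nw where Nw: "w * cnj w = of_int Nw" using ZK_normI[OF w(1)] by blast
    have "of_int (Ns ^ k * Nb) = (sg * cnj sg) ^ k * (b * cnj b)" using Ns Nb by simp
    also have "\<dots> = (sg ^ k * b) * cnj (sg ^ k * b)" by (simp add: power_mult_distrib mult_ac)
    also have "\<dots> = (of_int p ^ k * w) * cnj (of_int p ^ k * w)" unfolding w(2) ..
    also have "\<dots> = of_int (p ^ (2 * k) * Nw)"
    proof -
      have "(of_int p ^ k * w) * cnj (of_int p ^ k * w) = (of_int p ^ k * of_int p ^ k) * (w * cnj w)"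
        by (simp add: mult_ac)
      also have "\<dots> = of_int (p ^ (2 * k) * Nw)" unfolding Nw by (simp add: power_add[symmetric] mult_2)
      finally show ?thesis .
    qed
    finally have "Ns ^ k * Nb = p ^ (2 * k) * Nw" by (simp only: of_int_eq_iff)
    hence dv: "p ^ (2 * k) dvd Ns ^ k * Nb" by (metis dvd_triv_left)
    have nz: "Ns ^ k * Nb \<noteq> 0" using Nsz Nb(2) by simp
    have "2 * k \<le> multiplicity p (Ns ^ k * Nb)" by (rule multiplicity_geI[OF nz nu dv])
    also have "multiplicity p (Ns ^ k * Nb) = k * multiplicity p Ns + multiplicity p Nb"
    proof -
      have pe: "prime_elem p" using p by (rule prime_imp_prime_elem)
      have "multiplicity p (Ns ^ k * Nb) = multiplicity p (Ns ^ k) + multiplicity p Nb"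
        by (rule prime_elem_multiplicity_mult_distrib[OF pe]) (use Nsz Nb(2) in auto)
      also have "multiplicity p (Ns ^ k) = k * multiplicity p Ns"
        by (rule prime_elem_multiplicity_power_distrib[OF pe Nsz])
      finally show ?thesis .
    qed
    also have "\<dots> \<le> k + multiplicity p Nb" using ms by (simp add: mult_le_cancel1)
    finally show ?thesis by simp
  qed
  show ?thesis
    unfolding ideal_ord_def ipow_def[symmetric]
    by (rule Greatest_le_nat[of _ l "multiplicity p Nb"]) (use bl bound in auto)
qed

lemma pow_caseA:
  fixes p t :: int
  assumes hZ: "quad_ints m = ZK m" and q: "ideal q (quad_ring m)" and pq: "of_int p \<in> q"
    and n: "int n = p ^ l * t"
  shows "of_nat n * sqrt_neg m \<in> ipow m q l"
proof -
  have "of_int p ^ l \<in> ipow m q l" by (rule ipow_power[OF hZ pq])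
  hence "(of_int t * sqrt_neg m) * of_int p ^ l \<in> ipow m q l"
    by (rule ipow_abs[OF hZ q]) (intro ZK_mult sn_ZK ZK_of_int)
  moreover have "(of_nat n :: complex) = of_int (int n)" by simp
  ultimately show ?thesis unfolding n by (simp add: mult_ac)
qed

lemma pow_caseB:
  fixes p t :: int
  assumes m: "m > 0" and sq: "squarefree m" and hZ: "quad_ints m = ZK m"
    and pq: "primeideal q (quad_ring m)" and p: "prime p" and ppq: "of_int p \<in> q"
    and pm: "p dvd int m" and la: "l \<le> 2 * a + 1" and n: "int n = p ^ a * t"
  shows "of_nat n * sqrt_neg m \<in> ipow m q l"
proof -
  have q: "ideal q (quad_ring m)" using pq by (rule prime_ideal_ideal)
  obtain m' where m': "int m = p * m'" using pm by blast
  have ss: "sqrt_neg m * sqrt_neg m = of_int (- m') * of_int p"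
    unfolding sn_sq using m' by (metis mult.commute mult_minus_left of_int_minus of_int_mult of_int_of_nat_eq)
  have "of_int (- m') * of_int p \<in> q"
    using ideal_multI[OF q ppq, of "of_int (-m')"] hZ ZK_of_int[of "-m'" m] by simp
  hence "sqrt_neg m \<otimes>\<^bsub>quad_ring m\<^esub> sqrt_neg m \<in> q" using ss by simp
  hence sq_q: "sqrt_neg m \<in> q"
    using primeideal.I_prime[OF pq, of "sqrt_neg m" "sqrt_neg m"] sn_ZK hZ by auto
  have cpm: "coprime p m'"
  proof (rule ccontr)
    assume "\<not> coprime p m'"
    hence "p dvd m'" using prime_imp_coprime[OF p] by blast
    hence "p^2 dvd int m" unfolding m' by (simp add: power2_eq_square)
    thus False using sqf_int[OF sq p] by blast
  qed
  hence "gcd p m' = 1" by simp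
  then obtain u w where uw: "u * p + w * m' = 1" using bezout_int[of p m'] by metis
  have pe: "p = u * (p * p) + w * int m"
  proof -
    have "p = p * (u * p + w * m')" using uw by simp
    also have "\<dots> = u * (p * p) + w * (p * m')" by (simp add: algebra_simps)
    finally show ?thesis unfolding m' .
  qed
  have p2: "of_int p \<in> ipow m q 2"
  proof -
    have a1: "of_int p ^ 2 \<in> ipow m q 2" by (rule ipow_power[OF hZ ppq])
    have a2: "sqrt_neg m ^ 2 \<in> ipow m q 2" by (rule ipow_power[OF hZ sq_q])
    have b1: "of_int u * of_int p ^ 2 \<in> ipow m q 2" by (rule ipow_abs[OF hZ q a1]) simp
    have b2: "of_int (- w) * sqrt_neg m ^ 2 \<in> ipow m q 2" by (rule ipow_abs[OF hZ q a2]) (rule ZK_of_int)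
    have "of_int u * of_int p ^ 2 + of_int (- w) * sqrt_neg m ^ 2 \<in> ipow m q 2"
      by (rule ipow_add[OF hZ q b1 b2])
    moreover have "of_int u * of_int p ^ 2 + of_int (- w) * sqrt_neg m ^ 2 = (of_int p :: complex)"
    proof -
      have "(of_int p :: complex) = of_int (u * (p * p) + w * int m)" using pe by simp
      also have "\<dots> = of_int u * of_int p ^ 2 + of_int w * of_nat m" by (simp add: power2_eq_square)
      also have "\<dots> = of_int u * of_int p ^ 2 + of_int (- w) * sqrt_neg m ^ 2" by (simp add: sn_sq2)
      finally show ?thesis by simp
    qed
    ultimately show ?thesis by simp
  qed
  have "of_int p ^ a \<in> ipow m q (2 * a)" by (rule ipow_powk[OF hZ q p2])
  hence "of_int p ^ a * sqrt_neg m \<in> ipow m q (2 * a + 1)"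
    by (rule ipow_mult[OF hZ q]) (rule ipow_one[OF sq_q hZ])
  hence "of_int t * (of_int p ^ a * sqrt_neg m) \<in> ipow m q (2 * a + 1)"
    by (rule ipow_abs[OF hZ q]) simp
  hence "of_int t * (of_int p ^ a * sqrt_neg m) \<in> ipow m q l"
    using ipow_mono[OF hZ q la] by blast
  moreover have "(of_nat n :: complex) = of_int (int n)" by simp
  ultimately show ?thesis unfolding n by (simp add: mult_ac)
qed

theorem lemma9p3:
  fixes l R S T S' v m n :: nat
  assumes "prime l"
    and "R > 0" "S > 0" "T > 0"
    and "coprime R S" "coprime R T" "coprime S T"
    and "S' = odd_part_rad S"
    and "v > 0" "S * S' = v ^ 2"
    and "m > 0" "squarefree m" "n > 0" "T * S' = m * n ^ 2"
    and i: "\<forall>q. primeideal q (quad_ring m) \<and> q \<noteq> {0} \<longrightarrow>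
              ideal_ord (quad_ring m) q (of_nat n * sqrt_neg m) < l"
    and ii: "\<forall>c \<in> {1, -1, -2 :: complex}. \<forall>x \<in> quad_ints m. x ^ l + (c - x) ^ l - 2 \<noteq> 0"
    and iii: "\<forall>x \<in> quad_ints m. x ^ l + (2 - x) ^ l - 2 = 0 \<longrightarrow> x = 1"
  shows "\<forall>(\<sigma>::int) (\<eta>::complex). \<eta> \<in> quad_field m \<and>
           of_nat v * of_int \<sigma> ^ l + of_nat n * sqrt_neg m = of_nat n * sqrt_neg m * \<eta> ^ l
           \<longrightarrow> \<sigma> = 0 \<and> \<eta> = 1"
proof (intro allI impI, elim conjE)
  fix \<sigma> :: int and \<eta> :: complex
  assume \<eta>K: "\<eta> \<in> quad_field m"
    and eq0: "of_nat v * of_int \<sigma> ^ l + of_nat n * sqrt_neg m = of_nat n * sqrt_neg m * \<eta> ^ l"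
  have m: "m > 0" and sq: "squarefree m" and n: "n > 0" and lp: "prime l" and v: "v > 0" using assms by auto
  have hZ: "quad_ints m = ZK m" by (rule quad_ints_ZK[OF m sq])
  define s where "s = sqrt_neg m"
  define \<beta> where "\<beta> = of_nat n * s"
  define \<gamma> where "\<gamma> = int v * \<sigma> ^ l"
  have s0: "s \<noteq> 0" unfolding s_def using sn_nz[OF m] .
  have b0: "\<beta> \<noteq> 0" unfolding \<beta>_def using s0 n by simp
  have eq: "of_int \<gamma> + \<beta> = \<beta> * \<eta> ^ l" using eq0 unfolding \<gamma>_def \<beta>_def s_def by simp
  have ol: "odd l"
  proof (rule ccontr)
    assume "\<not> odd l"
    hence "l = 2" using lp by (metis prime_odd_nat prime_gt_1_nat le_neq_implies_less Suc_leI numeral_2_eq_2 One_nat_def)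
    moreover have "(-1::complex) \<in> quad_ints m" using hZ ZK_of_int[of "-1" m] by simp
    ultimately show False using ii by auto
  qed
  have l0: "l > 0" using lp prime_gt_0_nat by blast
  have el: "\<eta> ^ l = 1 + of_int \<gamma> / \<beta>" using eq b0 by (simp add: field_simps)
  have cb: "cnj \<beta> = - \<beta>" unfolding \<beta>_def s_def by (simp add: cnj_sn)
  have cel: "cnj \<eta> ^ l = 1 - of_int \<gamma> / \<beta>"
  proof -
    have "cnj \<eta> ^ l = cnj (\<eta> ^ l)" by simp
    also have "\<dots> = 1 + of_int \<gamma> / cnj \<beta>" unfolding el by simp
    finally show ?thesis unfolding cb by simp
  qed
  have bsq: "\<beta> * \<beta> = - of_nat (n^2 * m)"
  proof -
    have "\<beta> * \<beta> = of_nat n * of_nat n * (s * s)" unfolding \<beta>_def by (simp only: mult_ac)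
    also have "\<dots> = - of_nat (n^2 * m)" unfolding s_def sn_sq by (simp add: power2_eq_square)
    finally show ?thesis .
  qed
  obtain a b where \<eta>ab: "\<eta> = of_rat a + of_rat b * sqrt_neg m" using \<eta>K unfolding quad_field_def by blast
  define r where "r = a^2 + of_nat m * b^2"
  have nr: "\<eta> * cnj \<eta> = of_rat r" unfolding \<eta>ab r_def by (rule norm_z)
  have "of_rat (r ^ l) = (\<eta> * cnj \<eta>) ^ l" unfolding nr by (simp add: of_rat_power)
  also have "\<dots> = \<eta> ^ l * cnj \<eta> ^ l" by (simp add: power_mult_distrib)
  also have "\<dots> = 1 - of_int \<gamma> ^ 2 / (\<beta> * \<beta>)" unfolding el cel using b0
    by (simp add: field_simps power2_eq_square)
  also have "\<dots> = 1 + of_int (\<gamma> ^ 2) / of_nat (n^2 * m)" unfolding bsq by simp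
  also have "\<dots> = of_rat (1 + of_int (\<gamma> ^ 2) / of_nat (n^2 * m))"
    by (simp add: of_rat_add of_rat_divide of_rat_mult of_rat_power)
  finally have rl: "r ^ l = 1 + of_int (\<gamma> ^ 2) / of_nat (n^2 * m)" by (simp only: of_rat_eq_iff)
  obtain A B where qr: "quotient_of r = (A, B)" by (cases "quotient_of r")
  hence B: "B > 0" "coprime A B" and rAB: "r = of_int A / of_int B"
    by (simp_all add: quotient_of_denom_pos quotient_of_coprime quotient_of_div)
  have eqAB: "A^l * (int n^2 * int m) = B^l * (int n^2 * int m + \<gamma>^2)"
  proof -
    have pos: "(of_nat (n^2 * m) :: rat) \<noteq> 0" using n m by simp
    have "of_int A ^ l / of_int B ^ l = 1 + of_int (\<gamma> ^ 2) / (of_nat (n^2 * m) :: rat)"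
      using rl unfolding rAB by (simp add: power_divide)
    hence "of_int A ^ l * of_nat (n^2 * m) = of_int B ^ l * (of_nat (n^2 * m) + of_int (\<gamma> ^ 2) :: rat)"
      using B pos by (simp add: field_simps)
    hence "rat_of_int (A^l * (int n^2 * int m)) = rat_of_int (B^l * (int n^2 * int m + \<gamma>^2))"
      by simp
    thus ?thesis by (simp only: of_int_eq_iff)
  qed
  have dvdg: "int n * int m dvd \<gamma>"
  proof (rule ccontr)
    assume nd: "\<not> int n * int m dvd \<gamma>"
    hence g0: "\<gamma> \<noteq> 0" by auto
    have "\<exists>p. prime p \<and> multiplicity p \<gamma> < multiplicity p (int n * int m)"
    proof (rule ccontr)
      assume "\<not> ?thesis"
      hence "\<And>p. prime p \<Longrightarrow> multiplicity p (int n * int m) \<le> multiplicity p \<gamma>" by (meson not_le)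
      hence "int n * int m dvd \<gamma>" by (intro multiplicity_le_imp_dvd) (use n m in auto)
      with nd show False by simp
    qed
    then obtain p where p: "prime p" and lt: "multiplicity p \<gamma> < multiplicity p (int n * int m)" by blast
    obtain q sg Ns where pq: "primeideal q (quad_ring m)" and ppq: "of_int p \<in> q" and sgZ: "sg \<in> ZK m"
      and sgP: "\<And>x. x \<in> q \<Longrightarrow> \<exists>w \<in> ZK m. sg * x = of_int p * w"
      and Ns: "sg * cnj sg = of_int Ns" "\<not> p^2 dvd Ns"
      using prime_above[OF m sq hZ p] by blast
    have qz: "q \<noteq> {0}"
    proof
      assume "q = {0}" with ppq have "p = 0" by simp
      thus False using p by simp
    qed
    have q: "ideal q (quad_ring m)" using pq by (rule prime_ideal_ideal)
    have bl: "\<beta> \<in> ipow m q l"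
    proof -
      have vc: "(\<not> p dvd int m \<and> l \<le> multiplicity p (int n)) \<or> (p dvd int m \<and> l \<le> 2 * multiplicity p (int n) + 1)"
        by (rule val_lemma[OF p ol n m sq g0 B(1) B(2) eqAB lt])
      obtain t where t: "int n = p ^ multiplicity p (int n) * t"
        using multiplicity_dvd[of p "int n"] by (metis dvd_def)
      from vc show ?thesis
      proof
        assume c: "\<not> p dvd int m \<and> l \<le> multiplicity p (int n)"
        then obtain t' where "int n = p ^ l * t'"
          using multiplicity_dvd'[of l p "int n"] by (metis dvd_def)
        thus ?thesis unfolding \<beta>_def s_def by (rule pow_caseA[OF hZ q ppq])
      next
        assume c: "p dvd int m \<and> l \<le> 2 * multiplicity p (int n) + 1"
        show ?thesis unfolding \<beta>_def s_def
          by (rule pow_caseB[OF m sq hZ pq p ppq _ _ t]) (use c in auto)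
      qed
    qed
    have Nb: "\<beta> * cnj \<beta> = of_int (int (n^2 * m))" using bsq cb by simp
    have Nb0: "int (n^2 * m) \<noteq> 0" using n m by (simp add: nat_0_less_mult_iff)
    have "l \<le> ideal_ord (quad_ring m) q \<beta>"
      by (rule ord_ge[OF hZ p sgP Ns Nb Nb0 bl])
    moreover have "ideal_ord (quad_ring m) q \<beta> < l" using i pq qz unfolding \<beta>_def s_def by blast
    ultimately show False by simp
  qed
  then obtain t where t: "\<gamma> = int n * int m * t" by blast
  have el2: "\<eta> ^ l = 1 - of_int t * s"
  proof -
    have "of_int \<gamma> / \<beta> = of_nat m * of_int t / s" unfolding t \<beta>_def using n s0 by (simp add: field_simps)
    also have "of_nat m = - (s * s)" unfolding s_def sn_sq by simp
    finally have "of_int \<gamma> / \<beta> = - (of_int t * s)" using s0 by (simp add: field_simps)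
    thus ?thesis unfolding el by simp
  qed
  have elZ: "\<eta> ^ l \<in> ZK m" unfolding el2 s_def by (intro ZK_diff ZK_mult sn_ZK) auto
  have ai: "algebraic_int \<eta>"
  proof (rule algebraic_int_root[OF ZK_algint[OF elZ], of "monom 1 l"])
    show "poly (monom 1 l) \<eta> = \<eta> ^ l" by (simp add: poly_monom)
  qed (use l0 in \<open>auto simp: degree_monom_eq coeff_monom\<close>)
  have \<eta>Z: "\<eta> \<in> ZK m" using ai \<eta>K hZ unfolding quad_ints_def by blast
  then obtain u w where uw: "\<eta> = of_int u + of_int w * om m" unfolding ZK_iff by blast
  define C where "C = 2 * u + w * dl m"
  have cnjC: "cnj \<eta> = of_int C - \<eta>" unfolding uw C_def by (simp add: cnj_om algebra_simps)
  have sum2: "\<eta> ^ l + cnj \<eta> ^ l = 2" unfolding el cel by simp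
  have C0: "C \<noteq> 0"
  proof
    assume "C = 0"
    hence "cnj \<eta> = - \<eta>" using cnjC by simp
    hence "\<eta> ^ l + cnj \<eta> ^ l = 0" using ol by simp
    thus False using sum2 by simp
  qed
  define Q where "Q = (\<Sum>i<l. \<eta> ^ i * (- cnj \<eta>) ^ (l - 1 - i))"
  have QZ: "Q \<in> ZK m" unfolding Q_def
    by (intro ZK_sum ZK_mult ZK_power ZK_uminus ZK_cnj \<eta>Z)
  obtain k where lk: "l = Suc k" using l0 by (cases l) auto
  have "\<eta> ^ l - (- cnj \<eta>) ^ l = (\<eta> - (- cnj \<eta>)) * Q"
    unfolding Q_def lk using diff_power_eq_sum[of \<eta> k "- cnj \<eta>"] by simp
  note iden = this
  have m1: "(- cnj \<eta>) ^ l = - (cnj \<eta> ^ l)" using ol by (simp add: power_minus_odd)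
  have pc: "\<eta> - (- cnj \<eta>) = of_int C" using cnjC by simp
  have "\<eta> ^ l + cnj \<eta> ^ l = of_int C * Q" using iden[unfolded m1 pc] by simp
  hence CQ: "of_int C * Q = 2" using sum2 by simp
  obtain u' w' where Q: "Q = of_int u' + of_int w' * om m" using QZ unfolding ZK_iff by blast
  have "of_int (C * u') + of_int (C * w') * om m = of_int C * Q" unfolding Q by (simp add: algebra_simps)
  also have "\<dots> = of_int 2 + of_int 0 * om m" using CQ by simp
  finally have "C * u' = 2" using coords_ZK[OF m] by blast
  hence "C dvd 2" using dvd_triv_left[of C u'] by simp
  hence "\<bar>C\<bar> \<le> 2" using dvd_imp_le_int[of 2 C] by simp
  hence Cc: "C = 1 \<or> C = -1 \<or> C = -2 \<or> C = 2" using C0 by linarith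
  have \<eta>q: "\<eta> \<in> quad_ints m" using \<eta>Z hZ by simp
  have root: "\<eta> ^ l + (of_int C - \<eta>) ^ l - 2 = 0" using sum2 cnjC by simp
  have C2: "C = 2"
  proof (rule ccontr)
    assume "C \<noteq> 2"
    hence "(of_int C :: complex) \<in> {1, -1, -2}" using Cc by auto
    thus False using ii \<eta>q root by blast
  qed
  have e1: "\<eta> = 1" using iii \<eta>q root C2 by simp
  hence "of_int \<gamma> = (0::complex)" using eq by simp
  hence "\<gamma> = 0" by simp
  hence "\<sigma> = 0" unfolding \<gamma>_def using v by simp
  thus "\<sigma> = 0 \<and> \<eta> = 1" using e1 by simp
qed

end
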